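(* Consider a linear additive SCM on $(X,S)$ given by the structural equations $X=MX+wS+b+U_X$, $S=U_S$, where $w,b\in\mathbb R^d$, $M\in\mathbb R^{d\times d}$ are deterministic with $I-M$ invertible, the graph is acyclic, and $U_S$ is independent of $U_X$. Then Assumption (I) holds and for $s,s'\in\mathcal S$ the structural counterfactual operator is $T^*_{\langle s'|s\rangle}(x)=x+(I-M)^{-1}w(s'-s)$. If moreover the distributions $\{\mu_s\}_{s\in\mathcal S}$ are absolutely continuous with respect to Lebesgue measure and have finite second-order moments, then for any $s,s'\in\mathcal S$, $T^*_{\langle s'|s\rangle}$ is the solution of $$\min_{T:\ T_\sharp\mu_s=\mu_{s'}}\int\|x-T(x)\|^2\,\mathrm d\mu_s(x).$$
   Context: Setting: a structural causal model (exogenous random vector $U$, structural equations defining endogenous variables from their endogenous and exogenous parents, acyclic graph, hence an a.s. unique solution) whose solution is $(X,S)$ with $X\in\mathbb R^d$ and $S$ taking values in a finite set $\mathcal S\subset\mathbb R$ with $\mathbb P(S=s)>0$ for all $s$. $U_X,U_S$ are the exogenous parents of $X$ and $S$. For $s\in\mathcal S$, $X_{S=s}$ is the $X$-component of the solution of the model in which the equation for $S$ is replaced by $S=s$ and everything else (including $U$) is kept. $\mu_s:=\mathcal L(X\mid S=s)$, $\mathcal X_s:=\operatorname{supp}\mu_s$. There is a measurable $F$ with $X=F(S,U_X)$ and $X_{S=s}=F(s,U_X)$ a.s.; $f_s(u):=F(s,u)$. Assumption (I): all $f_s$ are injective; then $T^*_{\langle s'|s\rangle}:=f_{s'}\circ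 f_s^{-1}|_{\mathcal X_s}$. $T_\sharp P:=P\circ T^{-1}$. *)

theory Defs
  imports "HOL-Probability.Probability"
begin

definition measure_support :: "'b::metric_space measure \<Rightarrow> 'b set" where
  "measure_support \<mu> = {x. \<forall>e>0. emeasure \<mu> (ball x e) > 0}"

text \<open>The causal graph induced by the coefficient matrix M (edge j -> i iff M i j \<noteq> 0)
  is acyclic: there is a topological ordering of the nodes.\<close>
definition acyclic_coeff :: "real^'d^'d \<Rightarrow> bool" where
  "acyclic_coeff M \<longleftrightarrow> (\<exists>r::'d \<Rightarrow> nat. inj r \<and> (\<forall>i j. M $ i $ j \<noteq> 0 \<longrightarrow> r j < r i))"

definition cond_law :: "'a measure \<Rightarrow> ('a \<Rightarrow> 'b::topological_space) \<Rightarrow> ('a \<Rightarrow> real) \<Rightarrow> real \<Rightarrow> 'b measure" where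
  "cond_law P X S s = distr (uniform_measure P {\<omega>\<in>space P. S \<omega> = s}) borel X"

end

theory Submission
  imports Defs
begin


lemma inv_props:
  fixes B :: "real^'d^'d"
  assumes "invertible B"
  shows "B ** matrix_inv B = mat 1" "matrix_inv B ** B = mat 1"
  using someI_ex[OF assms[unfolded invertible_def]] unfolding matrix_inv_def by auto

lemma solve_eq:
  fixes M :: "real^'d^'d"
  assumes "invertible (mat 1 - M)"
  shows "(y = M *v y + v) \<longleftrightarrow> y = matrix_inv (mat 1 - M) *v v"
proof -
  have e: "(mat 1 - M) *v y = y - M *v y" by (simp add: matrix_vector_mult_diff_rdistrib)
  have "(y = M *v y + v) \<longleftrightarrow> (mat 1 - M) *v y = v" using e by (auto simp: algebra_simps)
  also have "\<dots> \<longleftrightarrow> y = matrix_inv (mat 1 - M) *v v"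
  proof
    assume h: "(mat 1 - M) *v y = v"
    have "matrix_inv (mat 1 - M) *v ((mat 1 - M) *v y) = y"
      by (simp add: matrix_vector_mul_assoc inv_props[OF assms])
    then show "y = matrix_inv (mat 1 - M) *v v" using h by simp
  next
    assume h: "y = matrix_inv (mat 1 - M) *v v"
    show "(mat 1 - M) *v y = v" unfolding h
      by (simp add: matrix_vector_mul_assoc inv_props[OF assms])
  qed
  finally show ?thesis .
qed


lemma l1: "(p + q)^2 \<le> 2 * (p^2 + (q::real)^2)"
proof -
  have "0 \<le> (p - q)^2" by simp
  thus ?thesis by (simp add: power2_eq_square algebra_simps)
qed
lemma l2: "(n::real) \<le> n^2 + 1"
proof (cases "n \<le> 1")
  case True thus ?thesis using zero_le_power2[of n] by linarith
next
  case False hence "n * 1 \<le> n * n" by (intro mult_left_mono) auto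
  thus ?thesis by (simp add: power2_eq_square)
qed

lemma sq_add_bound: "norm ((a::'b::real_normed_vector) + b)^2 \<le> 2 * (norm a^2 + norm b^2)"
proof -
  have "norm (a+b) \<le> norm a + norm b" by (rule norm_triangle_ineq)
  hence "norm (a+b)^2 \<le> (norm a + norm b)^2" by (simp add: power_mono)
  also have "\<dots> \<le> 2 * (norm a^2 + norm b^2)" by (rule l1)
  finally show ?thesis .
qed

lemma integrable_sq_add:
  fixes g h :: "'a \<Rightarrow> real^'d"
  assumes [measurable]: "g \<in> borel_measurable N" "h \<in> borel_measurable N"
    and "integrable N (\<lambda>x. norm (g x)^2)" "integrable N (\<lambda>x. norm (h x)^2)"
  shows "integrable N (\<lambda>x. norm (g x + h x)^2)"
proof -
  have i: "integrable N (\<lambda>x. 2 * (norm (g x)^2 + norm (h x)^2))" using assms by auto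
  show ?thesis
  proof (rule Bochner_Integration.integrable_bound[OF i])
  show "(\<lambda>x. norm (g x + h x)^2) \<in> borel_measurable N" by measurable
  show "AE x in N. norm (norm (g x + h x)^2) \<le> norm (2 * (norm (g x)^2 + norm (h x)^2))"
    apply (rule AE_I2) subgoal for x using sq_add_bound[of "g x" "h x"] by simp done
qed
qed

lemma integrable_vec_of_sq:
  fixes g :: "'a \<Rightarrow> real^'d"
  assumes "prob_space N" and [measurable]: "g \<in> borel_measurable N"
    and "integrable N (\<lambda>x. norm (g x)^2)"
  shows "integrable N g"
proof -
  interpret prob_space N by fact
  have b: "norm (g x) \<le> norm (norm (g x)^2 + 1)" for x
  proof -
    have "norm (g x) \<le> norm (g x)^2 + 1" by (rule l2)
    thus ?thesis by simp
  qed
  have i: "integrable N (\<lambda>x. norm (g x)^2 + 1)" using assms by auto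
  show ?thesis
  proof (rule Bochner_Integration.integrable_bound[OF i])
    show "g \<in> borel_measurable N" by fact
    show "AE x in N. norm (g x) \<le> norm (norm (g x)^2 + 1)" using b by (intro AE_I2) simp
  qed
qed

lemma ot_translation:
  fixes \<nu> :: "(real^'d) measure" and c :: "real^'d" and T' :: "real^'d \<Rightarrow> real^'d"
  assumes ps: "prob_space \<nu>" and sets: "sets \<nu> = sets borel"
    and sqi: "integrable \<nu> (\<lambda>x. norm x^2)"
    and sqi': "integrable (distr \<nu> borel (\<lambda>x. x + c)) (\<lambda>x. norm x^2)"
    and Tm: "T' \<in> borel_measurable borel"
    and Td: "distr \<nu> borel T' = distr \<nu> borel (\<lambda>x. x + c)"
  shows "(\<integral>\<^sup>+x. ennreal ((norm (x - (x + c)))\<^sup>2) \<partial>\<nu>) \<le> (\<integral>\<^sup>+x. ennreal ((norm (x - T' x))\<^sup>2) \<partial>\<nu>)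
    \<and> ((\<integral>\<^sup>+x. ennreal ((norm (x - T' x))\<^sup>2) \<partial>\<nu>) = (\<integral>\<^sup>+x. ennreal ((norm (x - (x + c)))\<^sup>2) \<partial>\<nu>)
         \<longrightarrow> (AE x in \<nu>. T' x = x + c))"
proof -
  interpret prob_space \<nu> by fact
  have mT[measurable]: "T' \<in> borel_measurable \<nu>" using Tm measurable_cong_sets[OF sets refl] by blast
  have mid[measurable]: "(\<lambda>x. x) \<in> borel_measurable \<nu>"
  proof -
    show ?thesis by (subst measurable_cong_sets[OF sets refl]) simp
  qed
  have mc[measurable]: "(\<lambda>x. x + c) \<in> measurable \<nu> borel" using measurable_cong_sets[OF sets refl] by auto
  have sqT: "integrable \<nu> (\<lambda>x. norm (T' x)^2)"
    using sqi' unfolding Td[symmetric] by (subst (asm) integrable_distr_eq) auto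
  have sqc: "integrable \<nu> (\<lambda>x. norm (- c)^2)" by simp
  have sqmT: "integrable \<nu> (\<lambda>x. norm (- T' x)^2)" using sqT by simp
  have iX: "integrable \<nu> (\<lambda>x. x)" by (rule integrable_vec_of_sq[OF ps mid]) (use sqi in simp)
  have iT: "integrable \<nu> T'" by (rule integrable_vec_of_sq[OF ps mT sqT])
  define D where "D x = x + c - T' x" for x
  have mD[measurable]: "D \<in> borel_measurable \<nu>" unfolding D_def by measurable
  have sqD: "integrable \<nu> (\<lambda>x. norm (D x)^2)"
    unfolding D_def diff_conv_add_uminus
    by (rule integrable_sq_add) (auto intro!: integrable_sq_add[OF _ _ sqi] sqmT simp del: norm_minus_cancel)
  have sqf: "integrable \<nu> (\<lambda>x. norm (x - T' x)^2)"
    unfolding diff_conv_add_uminus by (rule integrable_sq_add[OF _ _ sqi sqmT]) auto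
  have int1: "(\<integral>x. T' x \<bullet> c \<partial>\<nu>) = (\<integral>x. (x + c) \<bullet> c \<partial>\<nu>)"
  proof -
    have "(\<integral>x. T' x \<bullet> c \<partial>\<nu>) = (\<integral>y. y \<bullet> c \<partial>distr \<nu> borel T')" by (subst integral_distr) auto
    also have "\<dots> = (\<integral>y. y \<bullet> c \<partial>distr \<nu> borel (\<lambda>x. x + c))" by (simp add: Td)
    also have "\<dots> = (\<integral>x. (x + c) \<bullet> c \<partial>\<nu>)" by (subst integral_distr) auto
    finally show ?thesis .
  qed
  have iDc: "(\<integral>x. D x \<bullet> c \<partial>\<nu>) = 0"
  proof -
    have "(\<integral>x. D x \<bullet> c \<partial>\<nu>) = (\<integral>x. (x + c) \<bullet> c - T' x \<bullet> c \<partial>\<nu>)"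
      unfolding D_def by (simp add: inner_diff_left)
    also have "\<dots> = (\<integral>x. (x + c) \<bullet> c \<partial>\<nu>) - (\<integral>x. T' x \<bullet> c \<partial>\<nu>)"
      by (rule Bochner_Integration.integral_diff) (use iX iT in \<open>auto simp: inner_add_left\<close>)
    finally show ?thesis using int1 by simp
  qed
  have pw: "norm (x - T' x)^2 = norm (D x)^2 - 2 * (D x \<bullet> c) + norm c ^ 2" for x
  proof -
    have "x - T' x = D x - c" unfolding D_def by simp
    thus ?thesis by (simp add: power2_norm_eq_inner inner_diff_left inner_diff_right inner_commute)
  qed
  have intD_c: "integrable \<nu> (\<lambda>x. D x \<bullet> c)"
    using iX iT unfolding D_def by (auto simp: inner_add_left inner_diff_left)
  have If: "(\<integral>x. norm (x - T' x)^2 \<partial>\<nu>) = (\<integral>x. norm (D x)^2 \<partial>\<nu>) + norm c^2"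
  proof -
    have "(\<integral>x. norm (x - T' x)^2 \<partial>\<nu>) = (\<integral>x. (norm (D x)^2 - 2 * (D x \<bullet> c)) + norm c ^ 2 \<partial>\<nu>)"
      by (simp add: pw)
    also have "\<dots> = (\<integral>x. norm (D x)^2 - 2 * (D x \<bullet> c) \<partial>\<nu>) + norm c^2"
      using sqD intD_c by (subst Bochner_Integration.integral_add) (auto simp: prob_space)
    also have "(\<integral>x. norm (D x)^2 - 2 * (D x \<bullet> c) \<partial>\<nu>) = (\<integral>x. norm (D x)^2 \<partial>\<nu>) - 2 * (\<integral>x. D x \<bullet> c \<partial>\<nu>)"
      using sqD intD_c by (subst Bochner_Integration.integral_diff) auto
    finally show ?thesis using iDc by simp
  qed
  have L: "(\<integral>\<^sup>+x. ennreal ((norm (x - (x + c)))\<^sup>2) \<partial>\<nu>) = ennreal (norm c^2)"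
    by (simp add: emeasure_space_1)
  have R: "(\<integral>\<^sup>+x. ennreal ((norm (x - T' x))\<^sup>2) \<partial>\<nu>) = ennreal (\<integral>x. norm (x - T' x)^2 \<partial>\<nu>)"
    by (rule nn_integral_eq_integral[OF sqf]) auto
  have g0: "0 \<le> (\<integral>x. norm (D x)^2 \<partial>\<nu>)" by (rule integral_nonneg_AE) auto
  show ?thesis
  proof
    show "(\<integral>\<^sup>+x. ennreal ((norm (x - (x + c)))\<^sup>2) \<partial>\<nu>) \<le> (\<integral>\<^sup>+x. ennreal ((norm (x - T' x))\<^sup>2) \<partial>\<nu>)"
      unfolding L R If using g0 by (intro ennreal_leI) simp
    show "(\<integral>\<^sup>+x. ennreal ((norm (x - T' x))\<^sup>2) \<partial>\<nu>) = (\<integral>\<^sup>+x. ennreal ((norm (x - (x + c)))\<^sup>2) \<partial>\<nu>)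
         \<longrightarrow> (AE x in \<nu>. T' x = x + c)"
    proof
      assume "(\<integral>\<^sup>+x. ennreal ((norm (x - T' x))\<^sup>2) \<partial>\<nu>) = (\<integral>\<^sup>+x. ennreal ((norm (x - (x + c)))\<^sup>2) \<partial>\<nu>)"
      hence "(\<integral>x. norm (D x)^2 \<partial>\<nu>) + norm c^2 = norm c^2"
        unfolding L R If using g0 by (subst (asm) ennreal_inj) auto
      hence "(\<integral>x. norm (D x)^2 \<partial>\<nu>) = 0" by simp
      hence "AE x in \<nu>. norm (D x)^2 = 0" using integral_nonneg_eq_0_iff_AE[OF sqD] by auto
      thus "AE x in \<nu>. T' x = x + c" by eventually_elim (simp add: D_def)
    qed
  qed
qed


theorem corollary1:
  fixes P :: "'a measure"
    and X :: "'a \<Rightarrow> real^'d" and S U_S :: "'a \<Rightarrow> real" and U_X :: "'a \<Rightarrow> real^'d"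
    and M :: "real^'d^'d" and w b :: "real^'d" and SS :: "real set"
    and F :: "real \<Rightarrow> real^'d \<Rightarrow> real^'d"
    and \<mu> :: "real \<Rightarrow> (real^'d) measure"
    and T :: "real \<Rightarrow> real \<Rightarrow> real^'d \<Rightarrow> real^'d"
  assumes P: "prob_space P"
    and UX_meas: "U_X \<in> borel_measurable P"
    and US_meas: "U_S \<in> borel_measurable P"
    and indep: "prob_space.indep_set P
        (sigma_sets (space P) {U_S -` A \<inter> space P | A. A \<in> sets borel})
        (sigma_sets (space P) {U_X -` A \<inter> space P | A. A \<in> sets borel})"
    and invIM: "invertible (mat 1 - M)"
    and acyc: "acyclic_coeff M"
    and eqS: "\<forall>\<omega>\<in>space P. S \<omega> = U_S \<omega>"
    and eqX: "\<forall>\<omega>\<in>space P. X \<omega> = M *v X \<omega> + S \<omega> *\<^sub>R w + b + U_X \<omega>"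
    and SS_fin: "finite SS"
    and S_in: "\<forall>\<omega>\<in>space P. S \<omega> \<in> SS"
    and S_pos: "\<forall>s\<in>SS. measure P {\<omega>\<in>space P. S \<omega> = s} > 0"
  defines "F \<equiv> \<lambda>s u. matrix_inv (mat 1 - M) *v (s *\<^sub>R w + b + u)"
    and "\<mu> \<equiv> \<lambda>s. cond_law P X S s"
    and "T \<equiv> \<lambda>s s' x. F s' (inv_into UNIV (F s) x)"
  shows
    "(\<forall>\<omega>\<in>space P. X \<omega> = F (S \<omega>) (U_X \<omega>))
     \<and> (\<forall>s. \<forall>\<omega>\<in>space P. \<forall>y. (y = M *v y + s *\<^sub>R w + b + U_X \<omega>) \<longleftrightarrow> y = F s (U_X \<omega>))
     \<and> (\<forall>s. inj (F s))
     \<and> (\<forall>s\<in>SS. \<forall>s'\<in>SS. \<forall>x\<in>measure_support (\<mu> s).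
          T s s' x = x + matrix_inv (mat 1 - M) *v ((s' - s) *\<^sub>R w))
     \<and> ((\<forall>s\<in>SS. absolutely_continuous lborel (\<mu> s) \<and> integrable (\<mu> s) (\<lambda>x. norm x ^ 2))
        \<longrightarrow> (\<forall>s\<in>SS. \<forall>s'\<in>SS.
              T s s' \<in> borel_measurable borel
            \<and> distr (\<mu> s) borel (T s s') = \<mu> s'
            \<and> (\<forall>T'. T' \<in> borel_measurable borel \<and> distr (\<mu> s) borel T' = \<mu> s' \<longrightarrow>
                  (\<integral>\<^sup>+x. ennreal ((norm (x - T s s' x))\<^sup>2) \<partial>\<mu> s)
                    \<le> (\<integral>\<^sup>+x. ennreal ((norm (x - T' x))\<^sup>2) \<partial>\<mu> s)
                \<and> ((\<integral>\<^sup>+x. ennreal ((norm (x - T' x))\<^sup>2) \<partial>\<mu> s)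
                      = (\<integral>\<^sup>+x. ennreal ((norm (x - T s s' x))\<^sup>2) \<partial>\<mu> s)
                    \<longrightarrow> (AE x in \<mu> s. T' x = T s s' x)))))"
  
proof -
  interpret P: prob_space P by fact
  define A where "A = matrix_inv (mat 1 - M)"
  have inv1: "(mat 1 - M) ** A = mat 1" and inv2: "A ** (mat 1 - M) = mat 1"
    using inv_props[OF invIM] by (auto simp: A_def)
  have Fe: "F s u = A *v (s *\<^sub>R w + b + u)" for s u by (simp add: F_def A_def)
  have c2: "\<forall>s. \<forall>\<omega>\<in>space P. \<forall>y. (y = M *v y + s *\<^sub>R w + b + U_X \<omega>) \<longleftrightarrow> y = F s (U_X \<omega>)"
    using solve_eq[OF invIM] by (simp add: F_def add.assoc)
  have c1: "\<forall>\<omega>\<in>space P. X \<omega> = F (S \<omega>) (U_X \<omega>)"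
  proof
    fix \<omega> assume o: "\<omega> \<in> space P"
    show "X \<omega> = F (S \<omega>) (U_X \<omega>)"
      using c2[rule_format, where s="S \<omega>" and y="X \<omega>", OF o] eqX o by simp
  qed
  have c3: "\<forall>s. inj (F s)"
  proof (intro allI injI)
    fix s u1 u2 assume "F s u1 = F s u2"
    hence "(mat 1 - M) *v (A *v (s *\<^sub>R w + b + u1)) = (mat 1 - M) *v (A *v (s *\<^sub>R w + b + u2))"
      by (simp add: Fe)
    thus "u1 = u2" by (simp add: matrix_vector_mul_assoc inv1)
  qed
  define c where "c s s' = A *v ((s' - s) *\<^sub>R w)" for s s'
  have lin: "A *v (s *\<^sub>R w + b + u) + A *v ((s' - s) *\<^sub>R w) = A *v (s' *\<^sub>R w + b + u)" for s s' u
  proof -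
    have "(s *\<^sub>R w + b + u) + (s' - s) *\<^sub>R w = s' *\<^sub>R w + b + u" by (simp add: algebra_simps)
    hence "A *v ((s *\<^sub>R w + b + u) + (s' - s) *\<^sub>R w) = A *v (s' *\<^sub>R w + b + u)" by (rule arg_cong)
    thus ?thesis by (simp only: matrix_vector_right_distrib)
  qed
  have Tf: "T s s' = (\<lambda>x. x + c s s')" for s s'
  proof
    fix x
    have e: "s *\<^sub>R w + b + ((mat 1 - M) *v x - s *\<^sub>R w - b) = (mat 1 - M) *v x" by simp
    have "F s ((mat 1 - M) *v x - s *\<^sub>R w - b) = x"
      unfolding Fe e by (simp add: matrix_vector_mul_assoc inv2)
    hence "x \<in> range (F s)" by (metis rangeI)
    hence fx: "F s (inv_into UNIV (F s) x) = x" by (rule f_inv_into_f)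
    define u0 where "u0 = inv_into UNIV (F s) x"
    have "T s s' x = F s' u0" by (simp add: T_def u0_def)
    also have "\<dots> = F s u0 + c s s'" unfolding Fe c_def by (rule lin[symmetric])
    finally show "T s s' x = x + c s s'" using fx u0_def by simp
  qed
  have c4: "\<forall>s\<in>SS. \<forall>s'\<in>SS. \<forall>x\<in>measure_support (\<mu> s).
          T s s' x = x + matrix_inv (mat 1 - M) *v ((s' - s) *\<^sub>R w)"
    by (simp add: Tf c_def A_def)
  have mv[measurable]: "(\<lambda>x. A *v x) \<in> borel_measurable borel"
    by (rule borel_measurable_continuous_onI[OF matrix_vector_mult_linear_continuous_on])
  have Fm[measurable]: "F s \<in> borel_measurable borel" for s
  proof -
    have "(\<lambda>u. A *v (s *\<^sub>R w + b + u)) \<in> borel_measurable borel"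
      using measurable_compose[OF _ mv, of "\<lambda>u. s *\<^sub>R w + b + u" borel] by simp
    thus ?thesis by (simp add: Fe[abs_def])
  qed
  have Sm[measurable]: "S \<in> borel_measurable P"
    using US_meas eqS by (metis measurable_cong)
  have Xm[measurable]: "X \<in> borel_measurable P"
  proof -
    have "(\<lambda>\<omega>. A *v (S \<omega> *\<^sub>R w + b + U_X \<omega>)) \<in> borel_measurable P"
      using measurable_compose[OF _ mv, of "\<lambda>\<omega>. S \<omega> *\<^sub>R w + b + U_X \<omega>" P] UX_meas Sm by simp
    thus ?thesis using c1 by (subst measurable_cong[where g="\<lambda>\<omega>. A *v (S \<omega> *\<^sub>R w + b + U_X \<omega>)"]) (auto simp: Fe)
  qed
  define L where "L = distr P borel U_X"
  have psL: "prob_space L" unfolding L_def by (rule P.prob_space_distr[OF UX_meas])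
  have Lm: "F s \<in> measurable L borel" for s unfolding L_def by simp
  have key: "\<mu> s = distr L borel (F s)" if sS: "s \<in> SS" for s
  proof (rule measure_eqI)
    show "sets (\<mu> s) = sets (distr L borel (F s))" by (simp add: \<mu>_def cond_law_def)
  next
    fix B assume "B \<in> sets (\<mu> s)"
    hence B: "B \<in> sets borel" by (simp add: \<mu>_def cond_law_def)
    define E where "E = {\<omega>\<in>space P. S \<omega> = s}"
    have Ee: "E \<in> sets P" unfolding E_def by measurable
    define G where "G = U_X -` (F s -` B) \<inter> space P"
    have FB: "F s -` B \<in> sets borel" using measurable_sets[OF Fm B] by simp
    have Ge: "G \<in> sets P" unfolding G_def using measurable_sets[OF UX_meas FB] .
    have pE: "P.prob E > 0" using S_pos sS by (simp add: E_def)
    have ind: "P.prob (E \<inter> G) = P.prob E * P.prob G"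
    proof (rule P.indep_setD[OF indep])
      have Eeq: "E = U_S -` {s} \<inter> space P" using eqS by (auto simp: E_def)
      have g1: "U_S -` {s} \<inter> space P \<in> {U_S -` A \<inter> space P | A. A \<in> sets borel}"
        by (rule CollectI, rule exI[of _ "{s}"]) simp
      show "E \<in> sigma_sets (space P) {U_S -` A \<inter> space P | A. A \<in> sets borel}"
        unfolding Eeq by (rule sigma_sets.Basic[OF g1])
      have g2: "G \<in> {U_X -` A \<inter> space P | A. A \<in> sets borel}"
        unfolding G_def by (rule CollectI, rule exI[of _ "F s -` B"]) (simp add: FB)
      show "G \<in> sigma_sets (space P) {U_X -` A \<inter> space P | A. A \<in> sets borel}"
        by (rule sigma_sets.Basic[OF g2])
    qed
    have XE: "X -` B \<inter> space P \<inter> E = E \<inter> G"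
      using c1 by (auto simp: E_def G_def)
    have "emeasure (\<mu> s) B = emeasure (uniform_measure P E) (X -` B \<inter> space P)"
      unfolding \<mu>_def cond_law_def E_def[symmetric]
      by (subst emeasure_distr) (auto simp: B measurable_cong_sets[OF sets_uniform_measure refl] Xm)
    also have "\<dots> = emeasure P (E \<inter> (X -` B \<inter> space P)) / emeasure P E"
      using Ee Xm B by (subst emeasure_uniform_measure) auto
    also have "E \<inter> (X -` B \<inter> space P) = E \<inter> G" using XE by blast
    also have "emeasure P (E \<inter> G) / emeasure P E = ennreal (P.prob (E \<inter> G) / P.prob E)"
      using pE by (simp add: P.emeasure_eq_measure divide_ennreal)
    also have "\<dots> = ennreal (P.prob G)" using ind pE by simp
    also have "\<dots> = emeasure (distr L borel (F s)) B"
    proof -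
      have "emeasure (distr L borel (F s)) B = emeasure L (F s -` B \<inter> space L)"
        by (rule emeasure_distr) (auto simp: Lm B)
      also have "F s -` B \<inter> space L = F s -` B" by (simp add: L_def)
      also have "emeasure L (F s -` B) = emeasure P G"
        unfolding L_def G_def by (rule emeasure_distr[OF UX_meas FB])
      finally show ?thesis by (simp add: P.emeasure_eq_measure)
    qed
    finally show "emeasure (\<mu> s) B = emeasure (distr L borel (F s)) B" .
  qed
  have shift: "distr (\<mu> s) borel (\<lambda>x. x + c s s') = \<mu> s'" if "s \<in> SS" "s' \<in> SS" for s s'
  proof -
    have "distr (\<mu> s) borel (\<lambda>x. x + c s s') = distr L borel ((\<lambda>x. x + c s s') \<circ> F s)"
      unfolding key[OF that(1)] by (rule distr_distr) (auto simp: Lm)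
    also have "(\<lambda>x. x + c s s') \<circ> F s = F s'"
      by (rule ext) (simp only: comp_def Fe c_def lin)
    finally show ?thesis using key[OF that(2)] by simp
  qed
  have ps: "prob_space (\<mu> s)" if "s \<in> SS" for s
    unfolding key[OF that] by (rule prob_space.prob_space_distr[OF psL Lm])
  have sets_mu: "sets (\<mu> s) = sets borel" for s by (simp add: \<mu>_def cond_law_def)
  have c5: "(\<forall>s\<in>SS. absolutely_continuous lborel (\<mu> s) \<and> integrable (\<mu> s) (\<lambda>x. norm x ^ 2))
        \<longrightarrow> (\<forall>s\<in>SS. \<forall>s'\<in>SS.
              T s s' \<in> borel_measurable borel
            \<and> distr (\<mu> s) borel (T s s') = \<mu> s'
            \<and> (\<forall>T'. T' \<in> borel_measurable borel \<and> distr (\<mu> s) borel T' = \<mu> s' \<longrightarrow>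
                  (\<integral>\<^sup>+x. ennreal ((norm (x - T s s' x))\<^sup>2) \<partial>\<mu> s)
                    \<le> (\<integral>\<^sup>+x. ennreal ((norm (x - T' x))\<^sup>2) \<partial>\<mu> s)
                \<and> ((\<integral>\<^sup>+x. ennreal ((norm (x - T' x))\<^sup>2) \<partial>\<mu> s)
                      = (\<integral>\<^sup>+x. ennreal ((norm (x - T s s' x))\<^sup>2) \<partial>\<mu> s)
                    \<longrightarrow> (AE x in \<mu> s. T' x = T s s' x))))"
  proof (intro impI ballI)
    fix s s' assume H: "\<forall>s\<in>SS. absolutely_continuous lborel (\<mu> s) \<and> integrable (\<mu> s) (\<lambda>x. norm x ^ 2)"
      and s: "s \<in> SS" and s': "s' \<in> SS"
    have A1: "T s s' \<in> borel_measurable borel" by (simp add: Tf)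
    have A2: "distr (\<mu> s) borel (T s s') = \<mu> s'" using shift[OF s s'] by (simp add: Tf)
    have A3: "\<forall>T'. T' \<in> borel_measurable borel \<and> distr (\<mu> s) borel T' = \<mu> s' \<longrightarrow>
                  (\<integral>\<^sup>+x. ennreal ((norm (x - T s s' x))\<^sup>2) \<partial>\<mu> s)
                    \<le> (\<integral>\<^sup>+x. ennreal ((norm (x - T' x))\<^sup>2) \<partial>\<mu> s)
                \<and> ((\<integral>\<^sup>+x. ennreal ((norm (x - T' x))\<^sup>2) \<partial>\<mu> s)
                      = (\<integral>\<^sup>+x. ennreal ((norm (x - T s s' x))\<^sup>2) \<partial>\<mu> s)
                    \<longrightarrow> (AE x in \<mu> s. T' x = T s s' x))"
    proof (intro allI impI)
    fix T' assume T': "T' \<in> borel_measurable borel \<and> distr (\<mu> s) borel T' = \<mu> s'"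
    have sq1: "integrable (\<mu> s) (\<lambda>x. norm x ^ 2)" using H s by blast
    have sq2: "integrable (distr (\<mu> s) borel (\<lambda>x. x + c s s')) (\<lambda>x. norm x ^ 2)"
      unfolding shift[OF s s'] using H s' by blast
    have Td: "distr (\<mu> s) borel T' = distr (\<mu> s) borel (\<lambda>x. x + c s s')"
      using T' shift[OF s s'] by simp
    have Tm: "T' \<in> borel_measurable borel" using T' by blast
    note ot = ot_translation[OF ps[OF s] sets_mu sq1 sq2 Tm Td]
    from ot show "(\<integral>\<^sup>+x. ennreal ((norm (x - T s s' x))\<^sup>2) \<partial>\<mu> s)
                    \<le> (\<integral>\<^sup>+x. ennreal ((norm (x - T' x))\<^sup>2) \<partial>\<mu> s)
                \<and> ((\<integral>\<^sup>+x. ennreal ((norm (x - T' x))\<^sup>2) \<partial>\<mu> s)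
                      = (\<integral>\<^sup>+x. ennreal ((norm (x - T s s' x))\<^sup>2) \<partial>\<mu> s)
                    \<longrightarrow> (AE x in \<mu> s. T' x = T s s' x))"
      by (simp add: Tf)
    qed
    show "T s s' \<in> borel_measurable borel
            \<and> distr (\<mu> s) borel (T s s') = \<mu> s'
            \<and> (\<forall>T'. T' \<in> borel_measurable borel \<and> distr (\<mu> s) borel T' = \<mu> s' \<longrightarrow>
                  (\<integral>\<^sup>+x. ennreal ((norm (x - T s s' x))\<^sup>2) \<partial>\<mu> s)
                    \<le> (\<integral>\<^sup>+x. ennreal ((norm (x - T' x))\<^sup>2) \<partial>\<mu> s)
                \<and> ((\<integral>\<^sup>+x. ennreal ((norm (x - T' x))\<^sup>2) \<partial>\<mu> s)
                      = (\<integral>\<^sup>+x. ennreal ((norm (x - T s s' x))\<^sup>2) \<partial>\<mu> s)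
                    \<longrightarrow> (AE x in \<mu> s. T' x = T s s' x)))"
      using A1 A2 A3 by (intro conjI)
  qed
  show ?thesis by (rule conjI[OF c1 conjI[OF c2 conjI[OF c3 conjI[OF c4 c5]]]])
qed

end
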